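(* Let $A\in M_n(\mathbb{FT})$ and let $G$ be a unit of $M_n(\mathbb{T})$ with $G\otimes A=A\otimes G$. Then $G$ has exactly one eigenvalue.
   Context: $\mathbb{FT}$ is $\mathbb{R}$ with $a\oplus b=\max(a,b)$, $a\otimes b=a+b$; $\mathbb{T}=\mathbb{R}\cup\{-\infty\}$ with the obvious extensions. $M_n(\mathbb{FT})\subseteq M_n(\mathbb{T})$ are the $n\times n$ matrices with entries in these, multiplied by $(A\otimes B)_{i,j}=\bigoplus_k A_{i,k}\otimes B_{k,j}$. $M_n(\mathbb{T})$ is a monoid (identity: $0$ on diagonal, $-\infty$ elsewhere); its units are the matrices with exactly one entry different from $-\infty$ in each row and each column. A real number $\lambda$ is an eigenvalue of $G\in M_n(\mathbb{T})$ if $G\otimes x=\lambda\otimes x$ (i.e. $(G\otimes x)_i=\lambda+x_i$ for all $i$) for some $x\in\mathbb{T}^n$ not all of whose entries are $-\infty$. *)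

theory Defs
  imports "HOL-Library.Extended_Real"
begin

text \<open>Tropical semiring T = R \<union> {-\<infinity>} is modelled inside ereal as the elements
  different from \<infinity>; FT = R is the finite ereals.\<close>

definition trop_elem :: "ereal \<Rightarrow> bool" where
  "trop_elem a \<longleftrightarrow> a \<noteq> \<infinity>"

definition trop_mat :: "('n::finite \<Rightarrow> 'n \<Rightarrow> ereal) \<Rightarrow> bool" where
  "trop_mat A \<longleftrightarrow> (\<forall>i j. trop_elem (A i j))"

definition ft_mat :: "('n::finite \<Rightarrow> 'n \<Rightarrow> ereal) \<Rightarrow> bool" where
  "ft_mat A \<longleftrightarrow> (\<forall>i j. A i j \<noteq> \<infinity> \<and> A i j \<noteq> -\<infinity>)"

definition trop_mult :: "('n::finite \<Rightarrow> 'n \<Rightarrow> ereal) \<Rightarrow> ('n \<Rightarrow> 'n \<Rightarrow> ereal) \<Rightarrow> ('n \<Rightarrow> 'n \<Rightarrow> ereal)" where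
  "trop_mult A B = (\<lambda>i j. Max (range (\<lambda>k. A i k + B k j)))"

definition trop_mult_vec :: "('n::finite \<Rightarrow> 'n \<Rightarrow> ereal) \<Rightarrow> ('n \<Rightarrow> ereal) \<Rightarrow> ('n \<Rightarrow> ereal)" where
  "trop_mult_vec A x = (\<lambda>i. Max (range (\<lambda>k. A i k + x k)))"

definition trop_id :: "'n::finite \<Rightarrow> 'n \<Rightarrow> ereal" where
  "trop_id = (\<lambda>i j. if i = j then 0 else -\<infinity>)"

definition trop_unit :: "('n::finite \<Rightarrow> 'n \<Rightarrow> ereal) \<Rightarrow> bool" where
  "trop_unit G \<longleftrightarrow> trop_mat G \<and>
     (\<exists>H. trop_mat H \<and> trop_mult G H = trop_id \<and> trop_mult H G = trop_id)"

definition trop_eigenvalue :: "('n::finite \<Rightarrow> 'n \<Rightarrow> ereal) \<Rightarrow> real \<Rightarrow> bool" where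
  "trop_eigenvalue G c \<longleftrightarrow> (\<exists>x. (\<forall>i. trop_elem (x i)) \<and> (\<exists>i. x i \<noteq> -\<infinity>) \<and>
     (\<forall>i. trop_mult_vec G x i = ereal c + x i))"

end

theory Submission
  imports Defs "HOL-Combinatorics.Combinatorics"
begin

lemma ereal_add_minf_iff:
  fixes a b :: ereal
  shows "a \<noteq> \<infinity> \<Longrightarrow> b \<noteq> \<infinity> \<Longrightarrow> (a + b = -\<infinity>) = (a = -\<infinity> \<or> b = -\<infinity>)"
  by (cases a; cases b) auto

lemma minf_plus_ereal[simp]:
  fixes b :: ereal
  shows "b \<noteq> \<infinity> \<Longrightarrow> -\<infinity> + b = -\<infinity>"
  by (cases b) auto

lemma max_range_obtain:
  fixes f :: "'n::finite \<Rightarrow> ereal"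
  shows "\<exists>k. f k = Max (range f)"
proof -
  have "Max (range f) \<in> range f" by (rule Max_in) auto
  then show ?thesis by (metis rangeE)
qed

lemma max_range_ge:
  fixes f :: "'n::finite \<Rightarrow> ereal"
  shows "f k \<le> Max (range f)"
  by (rule Max_ge) auto

lemma unit_perm:
  fixes G :: "'n::finite \<Rightarrow> 'n \<Rightarrow> ereal"
  assumes "trop_unit G"
  shows "\<exists>\<sigma> g. inj \<sigma> \<and> (\<forall>i j. G i j = (if j = \<sigma> i then ereal (g i) else -\<infinity>))"
proof -
  obtain H where Hm: "trop_mat H" and GH: "trop_mult G H = trop_id" and HG: "trop_mult H G = trop_id"
    and Gm: "trop_mat G"
    using assms unfolding trop_unit_def by blast
  have Gni: "G i j \<noteq> \<infinity>" for i j using Gm unfolding trop_mat_def trop_elem_def by blast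
  have Hni: "H i j \<noteq> \<infinity>" for i j using Hm unfolding trop_mat_def trop_elem_def by blast
  have GHe: "Max (range (\<lambda>k. G i k + H k j)) = (if i = j then 0 else -\<infinity>)" for i j
    using fun_cong[OF fun_cong[OF GH, of i], of j] unfolding trop_mult_def trop_id_def by simp
  have HGe: "Max (range (\<lambda>k. H i k + G k j)) = (if i = j then 0 else -\<infinity>)" for i j
    using fun_cong[OF fun_cong[OF HG, of i], of j] unfolding trop_mult_def trop_id_def by simp
  have GHoff: "G i k = -\<infinity> \<or> H k j = -\<infinity>" if "i \<noteq> j" for i j k
  proof -
    have "G i k + H k j \<le> -\<infinity>" using max_range_ge[of "\<lambda>k. G i k + H k j" k] GHe[of i j] that by simp
    then show ?thesis using ereal_add_minf_iff[OF Gni Hni] by simp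
  qed
  have HGoff: "H i k = -\<infinity> \<or> G k j = -\<infinity>" if "i \<noteq> j" for i j k
  proof -
    have "H i k + G k j \<le> -\<infinity>" using max_range_ge[of "\<lambda>k. H i k + G k j" k] HGe[of i j] that by simp
    then show ?thesis using ereal_add_minf_iff[OF Hni Gni] by simp
  qed
  have bk: "H k' i \<noteq> -\<infinity>" if "G i k' \<noteq> -\<infinity>" for i k'
  proof -
    obtain l where l: "H k' l + G l k' = 0"
      using max_range_obtain[of "\<lambda>l. H k' l + G l k'"] HGe[of k' k'] by auto
    have "H k' l \<noteq> -\<infinity>" using l Gni[of l k'] by (cases "G l k'") auto
    then have "l = i" using GHoff[of i l k'] that by blast
    then show ?thesis using \<open>H k' l \<noteq> -\<infinity>\<close> by simp
  qed
  have row: "\<exists>k. G i k \<noteq> -\<infinity> \<and> (\<forall>k'. G i k' \<noteq> -\<infinity> \<longrightarrow> k' = k)" for i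
  proof -
    obtain k where k: "G i k + H k i = 0"
      using max_range_obtain[of "\<lambda>k. G i k + H k i"] GHe[of i i] by auto
    have Gk: "G i k \<noteq> -\<infinity>" and Hk: "H k i \<noteq> -\<infinity>" using k Gni[of i k] Hni[of k i] by (cases "G i k"; cases "H k i"; auto)+
    have "k' = k" if "G i k' \<noteq> -\<infinity>" for k'
      using HGoff[of k k' i] Hk that by blast
    then show ?thesis using Gk by blast
  qed
  then obtain \<sigma> where \<sigma>: "\<And>i. G i (\<sigma> i) \<noteq> -\<infinity> \<and> (\<forall>k'. G i k' \<noteq> -\<infinity> \<longrightarrow> k' = \<sigma> i)"
    by metis
  have "inj \<sigma>"
  proof (rule injI)
    fix i i' assume eq: "\<sigma> i = \<sigma> i'"
    show "i = i'"
    proof (rule ccontr)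
      assume "i \<noteq> i'"
      have "H (\<sigma> i) i' \<noteq> -\<infinity>" using bk[of i' "\<sigma> i'"] \<sigma>[of i'] eq by simp
      then show False using GHoff[OF \<open>i \<noteq> i'\<close>, of "\<sigma> i"] \<sigma>[of i] by blast
    qed
  qed
  define g where "g i = real_of_ereal (G i (\<sigma> i))" for i
  have "G i j = (if j = \<sigma> i then ereal (g i) else -\<infinity>)" for i j
  proof (cases "j = \<sigma> i")
    case True
    have "G i (\<sigma> i) \<noteq> -\<infinity>" using \<sigma>[of i] by blast
    then have "G i (\<sigma> i) = ereal (g i)" using Gni[of i "\<sigma> i"] unfolding g_def
      by (cases "G i (\<sigma> i)") simp_all
    then show ?thesis using True by simp
  next
    case False
    then have "G i j = -\<infinity>" using \<sigma>[of i] by blast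
    then show ?thesis using False by simp
  qed
  then show ?thesis using \<open>inj \<sigma>\<close> by blast
qed

theorem lemma7p6:
  fixes A G :: "'n::finite \<Rightarrow> 'n \<Rightarrow> ereal"
  assumes "ft_mat A" and "trop_unit G" and "trop_mult G A = trop_mult A G"
  shows "\<exists>!c::real. trop_eigenvalue G c"
proof -
  obtain \<sigma> g where inj: "inj \<sigma>" and Gd: "\<And>i j. G i j = (if j = \<sigma> i then ereal (g i) else -\<infinity>)"
    using unit_perm[OF assms(2)] by blast
  define a where "a i j = real_of_ereal (A i j)" for i j
  have Aa: "A i j = ereal (a i j)" for i j
    using assms(1) unfolding ft_mat_def a_def by (cases "A i j") auto
  have Gv: "trop_mult_vec G x i = ereal (g i) + x (\<sigma> i)" if "\<forall>k. x k \<noteq> \<infinity>" for x i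
    unfolding trop_mult_vec_def
  proof (rule Max_eqI)
    show "finite (range (\<lambda>k. G i k + x k))" by simp
    show "ereal (g i) + x (\<sigma> i) \<in> range (\<lambda>k. G i k + x k)"
      by (rule range_eqI[of _ _ "\<sigma> i"]) (simp add: Gd)
    fix y assume "y \<in> range (\<lambda>k. G i k + x k)"
    then obtain k where "y = G i k + x k" by auto
    then show "y \<le> ereal (g i) + x (\<sigma> i)"
      using Gd[of i k] that[rule_format, of k] by (cases "k = \<sigma> i") auto
  qed
  have GA: "trop_mult G A i j = ereal (g i) + A (\<sigma> i) j" for i j
    unfolding trop_mult_def
  proof (rule Max_eqI)
    show "finite (range (\<lambda>k. G i k + A k j))" by simp
    show "ereal (g i) + A (\<sigma> i) j \<in> range (\<lambda>k. G i k + A k j)"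
      by (rule range_eqI[of _ _ "\<sigma> i"]) (simp add: Gd)
    fix y assume "y \<in> range (\<lambda>k. G i k + A k j)"
    then obtain k where "y = G i k + A k j" by auto
    then show "y \<le> ereal (g i) + A (\<sigma> i) j"
      using Gd[of i k] Aa[of k j] by (cases "k = \<sigma> i") auto
  qed
  have AG: "trop_mult A G i (\<sigma> j) = A i j + ereal (g j)" for i j
    unfolding trop_mult_def
  proof (rule Max_eqI)
    show "finite (range (\<lambda>k. A i k + G k (\<sigma> j)))" by simp
    show "A i j + ereal (g j) \<in> range (\<lambda>k. A i k + G k (\<sigma> j))"
      by (rule range_eqI[of _ _ j]) (simp add: Gd)
    fix y assume "y \<in> range (\<lambda>k. A i k + G k (\<sigma> j))"
    then obtain k where "y = A i k + G k (\<sigma> j)" by auto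
    then show "y \<le> A i j + ereal (g j)"
      using Gd[of k "\<sigma> j"] Aa[of i k] inj[THEN injD, of k j] by (cases "k = j") auto
  qed
  have comm: "g i + a (\<sigma> i) (\<sigma> j) = a i j + g j" for i j
    using GA[of i "\<sigma> j"] AG[of i j] assms(3) Aa by simp
  define s where "s i m = (\<Sum>t<m. g ((\<sigma> ^^ t) i))" for i m
  have iter: "a ((\<sigma> ^^ m) i) ((\<sigma> ^^ m) j) - a i j = s j m - s i m" for m i j
  proof (induction m)
    case 0 then show ?case by (simp add: s_def)
  next
    case (Suc m)
    have "a ((\<sigma> ^^ Suc m) i) ((\<sigma> ^^ Suc m) j) = a ((\<sigma> ^^ m) i) ((\<sigma> ^^ m) j) + g ((\<sigma> ^^ m) j) - g ((\<sigma> ^^ m) i)"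
      using comm[of "(\<sigma> ^^ m) i" "(\<sigma> ^^ m) j"] by simp
    then show ?case using Suc by (simp add: s_def)
  qed
  have "bij \<sigma>" using inj by (simp add: bij_def finite_UNIV_inj_surj)
  then have "permutation \<sigma>" by (simp add: permutation)
  then obtain N where N: "\<sigma> ^^ N = id" "N > 0" by (rule permutation_is_nilpotent)
  have sN: "s i N = s j N" for i j using iter[of N i j] N by simp
  have shift: "s (\<sigma> j) m = s j (Suc m) - g j" for j m
  proof -
    have "s j (Suc m) = g ((\<sigma> ^^ 0) j) + (\<Sum>t<m. g ((\<sigma> ^^ Suc t) j))"
      unfolding s_def by (rule sum.lessThan_Suc_shift)
    moreover have "(\<sigma> ^^ Suc t) j = (\<sigma> ^^ t) (\<sigma> j)" for t
      by (simp add: funpow_Suc_right del: funpow.simps)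
    ultimately show ?thesis unfolding s_def by simp
  qed
  have det: "c = s i N / N" if evc: "trop_eigenvalue G c" for c i
  proof -
    obtain x where xt: "\<forall>i. trop_elem (x i)" and xi: "\<exists>i. x i \<noteq> -\<infinity>"
      and xe: "\<forall>i. trop_mult_vec G x i = ereal c + x i"
      using evc unfolding trop_eigenvalue_def by blast
    have xni: "\<forall>k. x k \<noteq> \<infinity>" using xt unfolding trop_elem_def by blast
    have eq: "ereal (g j) + x (\<sigma> j) = ereal c + x j" for j using xe Gv[OF xni] by simp
    obtain i0 where i0: "x i0 \<noteq> -\<infinity>" using xi by blast
    define r where "r = real_of_ereal (x i0)"
    have xr: "x i0 = ereal r" using i0 xni unfolding r_def by (cases "x i0") auto
    have orb: "x ((\<sigma> ^^ m) i0) = ereal (r + m * c - s i0 m)" for m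
    proof (induction m)
      case 0 then show ?case using xr by (simp add: s_def)
    next
      case (Suc m)
      let ?j = "(\<sigma> ^^ m) i0"
      have e: "ereal (g ?j) + x (\<sigma> ?j) = ereal (c + (r + m * c - s i0 m))"
        using eq[of ?j] Suc by simp
      have "x (\<sigma> ?j) = ereal (c + (r + m * c - s i0 m) - g ?j)"
        using e xni[rule_format, of "\<sigma> ?j"] by (cases "x (\<sigma> ?j)") auto
      then show ?case by (simp add: s_def algebra_simps)
    qed
    have "x i0 = ereal (r + N * c - s i0 N)" using orb[of N] N by simp
    then have "N * c = s i0 N" using xr by simp
    then have "c = s i0 N / N" using N by (simp add: field_simps)
    then show ?thesis using sN[of i0 i] by simp
  qed
  define i0 :: 'n where "i0 = undefined"
  define lam where "lam = s i0 N / N"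
  have sl: "s j N = N * lam" for j using sN[of j i0] N unfolding lam_def by simp
  define P where "P m j = s j m - m * lam" for m j
  define x where "x j = ereal ((\<Sum>m<N. P m j) / N)" for j
  have Psh: "P m (\<sigma> j) = P (Suc m) j - (g j - lam)" for m j
    unfolding P_def using shift[of j m] by (simp add: algebra_simps)
  have sumsh: "(\<Sum>m<N. P m (\<sigma> j)) = (\<Sum>m<N. P m j) - N * (g j - lam)" for j
  proof -
    have "(\<Sum>m<N. P m (\<sigma> j)) = (\<Sum>m<N. P (Suc m) j) - N * (g j - lam)"
      by (simp add: Psh sum_subtractf)
    also have "(\<Sum>m<N. P (Suc m) j) = (\<Sum>m<Suc N. P m j) - P 0 j"
      using sum.lessThan_Suc_shift[of "\<lambda>m. P m j" N] by (simp del: sum.lessThan_Suc)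
    also have "\<dots> = (\<Sum>m<N. P m j)"
      using sl[of j] by (simp add: P_def s_def)
    finally show ?thesis .
  qed
  have ev: "trop_eigenvalue G lam"
    unfolding trop_eigenvalue_def
  proof (intro exI conjI allI)
    show "trop_elem (x i)" for i unfolding x_def trop_elem_def by simp
    show "x i0 \<noteq> -\<infinity>" unfolding x_def by simp
    fix j
    have "trop_mult_vec G x j = ereal (g j) + x (\<sigma> j)"
      using Gv[of x j] unfolding x_def by simp
    also have "\<dots> = ereal lam + x j"
      unfolding x_def using sumsh[of j] N by (simp add: field_simps)
    finally show "trop_mult_vec G x j = ereal lam + x j" .
  qed
  show ?thesis
  proof (rule ex1I[of _ lam])
    show "trop_eigenvalue G lam" by (rule ev)
    fix c assume "trop_eigenvalue G c"
    then show "c = lam" using det[of c i0] unfolding lam_def by simp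
  qed
qed

end
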